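(* Under the hypotheses and notation below, for every cluster $\mathrm{Cl}(y)$ and every $y'\in\mathrm{Cl}(y)$, we have $y'+e_Z(H_Zy')\in y+e_Z(H_Zy)+C_X^\perp$.
   Context: $\mathcal{C}=\mathrm{CSS}(C_X=\ker H_X,C_Z=\ker H_Z)$ is an $[[n,k,d]]_2$ CSS code ($H_Z\in\mathbb{F}_2^{m_Z\times n}$, $C_X^\perp\subseteq C_Z$) exhibiting $(c_1,c_2,\epsilon_0)$-clustering (for all $0<\epsilon<\epsilon_0$, every $y$ with $|H_Zy|\le\epsilon m_Z$ has $|y|_{C_X^\perp}\le c_1\epsilon n$ or $\ge c_2n$, and symmetrically for $X$), where $|y|_C=\min_{y'\in C}|y+y'|$. Let $\epsilon<\frac{1}{1000}\min\{\frac{\epsilon_0}{2},\frac{c_2}{4c_1},\frac{d}{2c_1n}\}$, $\epsilon'=1000\epsilon$, $G_Z^{\epsilon'}=\{y:|H_Zy|\le\epsilon'm_Z\}$. For $y\in G_Z^{\epsilon'}$, $\mathrm{Cl}(y)=\{y'\in G_Z^{\epsilon'}:|y+y'|_{C_X^\perp}\le2c_1\epsilon'n\}$; these clusters partition $G_Z^{\epsilon'}$, and $\mathrm{Cl}(y+c)=\mathrm{Cl}(y)+c$ for $c\in C_Z$. For each cluster let $\mathcal{T}(\mathrm{Cl}(y))=\{\mathrm{Cl}(y+c):c\in C_Z\}$ be its collection of translates, and for each such collection $\mathcal{T}$ fix an arbitrary representative cluster $R(\mathcal{T})\in\mathcal{T}$. For each syndrome $s=H_Zy$ with $y\in G_Z^{\epsilon'}$,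 fix an arbitrary element $e_Z(s)\in(y+C_Z)\cap R(\mathcal{T}(\mathrm{Cl}(y)))$ (this set is a nonempty coset of $C_X^\perp$, and it depends only on $s$). *)

theory Defs
  imports "HOL-Analysis.Analysis" "HOL-Library.Z2"
begin

text \<open>Vectors over F_2 of length n are modelled as bit^'n for a finite index type 'n
 (so n = CARD('n)); parity-check matrices as bit^'n^'m (m rows).\<close>

definition hw :: "bit^'k \<Rightarrow> nat" where
  "hw v = card {i. v $ i \<noteq> 0}"

definition ker :: "bit^'n^'m \<Rightarrow> (bit^'n) set" where
  "ker H = {x. H *v x = 0}"

definition dual :: "(bit^'n) set \<Rightarrow> (bit^'n) set" where
  "dual C = {y. \<forall>x\<in>C. (\<Sum>i\<in>UNIV. x $ i * y $ i) = 0}"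

definition dist_to :: "bit^'n \<Rightarrow> (bit^'n) set \<Rightarrow> nat" where
  "dist_to y C = Min {hw (y + c) | c. c \<in> C}"

definition nontriv_logicals :: "bit^'n^'mx \<Rightarrow> bit^'n^'mz \<Rightarrow> (bit^'n) set" where
  "nontriv_logicals HX HZ = (ker HZ - dual (ker HX)) \<union> (ker HX - dual (ker HZ))"

text \<open>d is the distance: minimum weight of a nontrivial logical operator
  (if there is none, d is only required to be a lower bound, i.e. plays the role of infinity).\<close>
definition is_css_distance :: "bit^'n^'mx \<Rightarrow> bit^'n^'mz \<Rightarrow> nat \<Rightarrow> bool" where
  "is_css_distance HX HZ d \<longleftrightarrow>
     (\<forall>y\<in>nontriv_logicals HX HZ. d \<le> hw y) \<and>
     (nontriv_logicals HX HZ \<noteq> {} \<longrightarrow> (\<exists>y\<in>nontriv_logicals HX HZ. hw y = d))"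

definition clustering :: "bit^'n^'mx \<Rightarrow> bit^'n^'mz \<Rightarrow> real \<Rightarrow> real \<Rightarrow> real \<Rightarrow> bool" where
  "clustering HX HZ c1 c2 e0 \<longleftrightarrow> (\<forall>e. 0 < e \<and> e < e0 \<longrightarrow>
     (\<forall>y. real (hw (HZ *v y)) \<le> e * real CARD('mz) \<longrightarrow>
        real (dist_to y (dual (ker HX))) \<le> c1 * e * real CARD('n) \<or>
        real (dist_to y (dual (ker HX))) \<ge> c2 * real CARD('n)) \<and>
     (\<forall>x. real (hw (HX *v x)) \<le> e * real CARD('mx) \<longrightarrow>
        real (dist_to x (dual (ker HZ))) \<le> c1 * e * real CARD('n) \<or>
        real (dist_to x (dual (ker HZ))) \<ge> c2 * real CARD('n)))"

definition goodZ :: "bit^'n^'mz \<Rightarrow> real \<Rightarrow> (bit^'n) set" where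
  "goodZ HZ e' = {y. real (hw (HZ *v y)) \<le> e' * real CARD('mz)}"

definition cluster :: "bit^'n^'mx \<Rightarrow> bit^'n^'mz \<Rightarrow> real \<Rightarrow> real \<Rightarrow> bit^'n \<Rightarrow> (bit^'n) set" where
  "cluster HX HZ c1 e' y = {y' \<in> goodZ HZ e'.
      real (dist_to (y + y') (dual (ker HX))) \<le> 2 * c1 * e' * real CARD('n)}"

definition translates :: "bit^'n^'mx \<Rightarrow> bit^'n^'mz \<Rightarrow> real \<Rightarrow> real \<Rightarrow> bit^'n \<Rightarrow> (bit^'n) set set" where
  "translates HX HZ c1 e' y = {cluster HX HZ c1 e' (y + c) | c. c \<in> ker HZ}"

end

theory Submission
  imports Defs
begin

lemma bit_self: "(a::bit) + a = 0" by (cases a) simp_all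
lemma vec_self: "(v::bit^'n) + v = 0" by (simp add: vec_eq_iff bit_self)

lemma finite_bit: "finite (UNIV :: bit set)"
proof -
  have e: "(UNIV::bit set) = {0::bit, 1}" using bit_not_zero_iff by blast
  show ?thesis by (subst e) simp
qed

lemma finite_bitvec: "finite (A :: (bit^'n) set)"
proof -
  have "finite (PiE (UNIV::'n set) (\<lambda>_. UNIV :: bit set))"
    by (rule finite_PiE) (auto simp: finite_bit)
  hence "finite (vec_lambda ` PiE (UNIV::'n set) (\<lambda>_. UNIV :: bit set))" by simp
  moreover have "UNIV \<subseteq> vec_lambda ` PiE (UNIV::'n set) (\<lambda>_. UNIV :: bit set)"
  proof
    fix v :: "bit^'n" show "v \<in> vec_lambda ` PiE UNIV (\<lambda>_. UNIV)"
      by (rule image_eqI[of _ _ "vec_nth v"]) auto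
  qed
  ultimately have "finite (UNIV :: (bit^'n) set)" by (rule finite_subset[rotated])
  thus ?thesis by (rule finite_subset[OF subset_UNIV])
qed

lemma hw_zero_iff: "hw (v::bit^'k) = 0 \<longleftrightarrow> v = 0"
  by (simp add: hw_def vec_eq_iff)

lemma hw_add: "hw ((u::bit^'k) + v) \<le> hw u + hw v"
proof -
  have "{i. (u+v) $ i \<noteq> 0} \<subseteq> {i. u $ i \<noteq> 0} \<union> {i. v $ i \<noteq> 0}" by auto
  hence "hw (u+v) \<le> card ({i. u $ i \<noteq> 0} \<union> {i. v $ i \<noteq> 0})"
    unfolding hw_def by (intro card_mono) auto
  also have "\<dots> \<le> hw u + hw v" unfolding hw_def by (rule card_Un_le)
  finally show ?thesis .
qed

lemma dual_zero: "0 \<in> dual C" by (simp add: dual_def)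
lemma dual_add: "a \<in> dual C \<Longrightarrow> b \<in> dual C \<Longrightarrow> a + b \<in> dual C"
  unfolding dual_def
proof (safe)
  fix x assume a: "\<forall>x\<in>C. (\<Sum>i\<in>UNIV. x $ i * a $ i) = 0" and b: "\<forall>x\<in>C. (\<Sum>i\<in>UNIV. x $ i * b $ i) = 0" and x: "x \<in> C"
  have "(\<Sum>i\<in>UNIV. x $ i * (a + b) $ i) = (\<Sum>i\<in>UNIV. x $ i * a $ i) + (\<Sum>i\<in>UNIV. x $ i * b $ i)"
    by (simp only: vector_add_component distrib_left sum.distrib)
  thus "(\<Sum>i\<in>UNIV. x $ i * (a + b) $ i) = 0" using a b x by simp
qed

lemma ker_add: "a \<in> ker H \<Longrightarrow> b \<in> ker H \<Longrightarrow> a + b \<in> ker H"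
  by (simp add: ker_def matrix_vector_right_distrib)

lemma dist_attained: "\<exists>w\<in>dual C. dist_to y (dual C) = hw (y + w)"
proof -
  let ?S = "{hw (y + c) | c. c \<in> dual C}"
  have "finite ?S" using finite_bitvec[of "dual C"] by (auto simp: setcompr_eq_image)
  moreover have "?S \<noteq> {}" using dual_zero by blast
  ultimately have "Min ?S \<in> ?S" by (rule Min_in)
  thus ?thesis unfolding dist_to_def by auto
qed

lemma dist_le: "w \<in> dual C \<Longrightarrow> dist_to y (dual C) \<le> hw (y + w)"
  unfolding dist_to_def by (rule Min_le) (use finite_bitvec[of "dual C"] in \<open>auto simp: setcompr_eq_image\<close>)

lemma dist_tri: "dist_to (a + b) (dual C) \<le> dist_to a (dual C) + dist_to b (dual C)"
proof -
  obtain wa where wa: "wa \<in> dual C" "dist_to a (dual C) = hw (a + wa)" using dist_attained by blast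
  obtain wb where wb: "wb \<in> dual C" "dist_to b (dual C) = hw (b + wb)" using dist_attained by blast
  have "dist_to (a + b) (dual C) \<le> hw (a + b + (wa + wb))" by (rule dist_le) (rule dual_add[OF wa(1) wb(1)])
  also have "a + b + (wa + wb) = (a + wa) + (b + wb)" by (simp add: algebra_simps)
  also have "hw \<dots> \<le> hw (a + wa) + hw (b + wb)" by (rule hw_add)
  finally show ?thesis using wa wb by simp
qed

lemma dist_zero: "dist_to y (dual C) = 0 \<Longrightarrow> y \<in> dual C"
proof -
  assume h: "dist_to y (dual C) = 0"
  obtain w where w: "w \<in> dual C" "dist_to y (dual C) = hw (y + w)" using dist_attained by blast
  hence "y + w = 0" using h hw_zero_iff by metis
  hence "y = w" by (metis add_right_cancel vec_self)
  thus ?thesis using w by simp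
qed

lemma vec_self2: "(v::bit^'n) + (v + w) = w"
  by (simp add: add.assoc[symmetric] vec_self)

lemma syn_add: "hw ((HZ::bit^'n^'m) *v (a + b)) \<le> hw (HZ *v a) + hw (HZ *v b)"
  by (simp add: matrix_vector_right_distrib hw_add)

theorem lemma4p11:
  fixes HX :: "bit^'n^'mx" and HZ :: "bit^'n^'mz"
    and c1 c2 e0 eps :: real and d :: nat
    and R :: "(bit^'n) set set \<Rightarrow> (bit^'n) set"
    and eZ :: "bit^'mz \<Rightarrow> bit^'n"
  assumes css: "dual (ker HX) \<subseteq> ker HZ"
    and dist: "is_css_distance HX HZ d"
    and clus: "clustering HX HZ c1 c2 e0"
    and c1_pos: "0 < c1"
    and eps_pos: "0 < eps"
    and eps_small: "eps < (1/1000) * min (e0 / 2) (min (c2 / (4 * c1)) (real d / (2 * c1 * real CARD('n))))"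
    and R_rep: "\<forall>y \<in> goodZ HZ (1000 * eps).
                  R (translates HX HZ c1 (1000 * eps) y) \<in> translates HX HZ c1 (1000 * eps) y"
    and eZ_def: "\<forall>y \<in> goodZ HZ (1000 * eps).
                  eZ (HZ *v y) \<in> {y + c | c. c \<in> ker HZ} \<inter> R (translates HX HZ c1 (1000 * eps) y)"
  shows "\<forall>y \<in> goodZ HZ (1000 * eps). \<forall>y' \<in> cluster HX HZ c1 (1000 * eps) y.
           y' + eZ (HZ *v y') \<in> {y + eZ (HZ *v y) + c | c. c \<in> dual (ker HX)}"
proof -
  define e' where "e' = 1000 * eps"
  define N where "N = real CARD('n)"
  define M where "M = real CARD('mz)"
  define D where "D = (\<lambda>v. real (dist_to v (dual (ker HX))))"
  have N_pos: "N \<ge> 1" unfolding N_def by simp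
  have M_nn: "M \<ge> 0" unfolding M_def by simp
  have mpos: "0 < min (e0 / 2) (min (c2 / (4 * c1)) (real d / (2 * c1 * real CARD('n))))"
    using eps_small eps_pos by linarith
  have e0: "2000 * eps < e0" using eps_small by linarith
  have c2: "4000 * c1 * eps < c2"
  proof -
    have "1000 * eps < c2 / (4 * c1)" using eps_small by linarith
    thus ?thesis using c1_pos by (simp add: field_simps)
  qed
  have e0_pos: "0 < e0" using e0 eps_pos by linarith
  have D_tri: "D (a + b) \<le> D a + D b" for a b
    unfolding D_def using dist_tri[of a b "ker HX"] by linarith
  have clusZ: "\<And>e v. 0 < e \<Longrightarrow> e < e0 \<Longrightarrow> real (hw (HZ *v v)) \<le> e * M \<Longrightarrow>
      D v \<le> c1 * e * N \<or> D v \<ge> c2 * N"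
    using clus unfolding clustering_def D_def N_def M_def by blast
  have A: "D v \<le> 2 * c1 * e' * N" if h1: "real (hw (HZ *v v)) \<le> 2 * e' * M" and h2: "D v \<le> 4 * c1 * e' * N" for v
  proof -
    have "D v \<le> c1 * (2000 * eps) * N \<or> D v \<ge> c2 * N"
      using clusZ[of "2000 * eps" v] eps_pos e0 h1 unfolding e'_def by auto
    moreover have "4 * c1 * e' * N < c2 * N"
      using c2 N_pos unfolding e'_def by (intro mult_strict_right_mono) auto
    ultimately show ?thesis using h2 unfolding e'_def by auto
  qed
  have B: "v \<in> dual (ker HX)" if h1: "v \<in> ker HZ" and h2: "D v \<le> 4 * c1 * e' * N" for v
  proof -
    define e where "e = min (e0 / 2) (1 / (2 * c1 * N))"
    have ep: "0 < e" unfolding e_def using e0_pos c1_pos N_pos by simp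
    have ee0: "e < e0" unfolding e_def using e0_pos by linarith
    have "HZ *v v = 0" using h1 by (simp add: ker_def)
    hence "real (hw (HZ *v v)) \<le> e * M" using hw_zero_iff[of "HZ *v v"] ep M_nn by simp
    hence "D v \<le> c1 * e * N \<or> D v \<ge> c2 * N" using clusZ ep ee0 by blast
    moreover have "4 * c1 * e' * N < c2 * N"
      using c2 N_pos unfolding e'_def by (intro mult_strict_right_mono) auto
    moreover have "c1 * e * N \<le> 1/2"
    proof -
      have "e \<le> 1 / (2 * c1 * N)" unfolding e_def by simp
      hence "c1 * N * e \<le> c1 * N * (1 / (2 * c1 * N))"
        using c1_pos N_pos by (intro mult_left_mono) auto
      also have "\<dots> = 1/2" using c1_pos N_pos by (simp add: field_simps)
      finally show ?thesis by (simp add: ac_simps)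
    qed
    ultimately have "D v \<le> 1/2" using h2 by linarith
    hence "dist_to v (dual (ker HX)) = 0" unfolding D_def by linarith
    thus ?thesis by (rule dist_zero)
  qed
  have good_iff: "y \<in> goodZ HZ e' \<longleftrightarrow> real (hw (HZ *v y)) \<le> e' * M" for y
    unfolding goodZ_def M_def by simp
  have cl_iff: "z \<in> cluster HX HZ c1 e' y \<longleftrightarrow> z \<in> goodZ HZ e' \<and> D (y + z) \<le> 2 * c1 * e' * N" for y z
    unfolding cluster_def D_def N_def by simp
  have syn2: "real (hw (HZ *v (a + b))) \<le> 2 * e' * M" if "a \<in> goodZ HZ e'" "b \<in> goodZ HZ e'" for a b
    using syn_add[of HZ a b] that unfolding good_iff by linarith
  have P: "cluster HX HZ c1 e' y = cluster HX HZ c1 e' y'"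
    if yg: "y \<in> goodZ HZ e'" and yc: "y' \<in> cluster HX HZ c1 e' y" for y y'
  proof (rule set_eqI, rule iffI)
    have y'g: "y' \<in> goodZ HZ e'" and dyy: "D (y + y') \<le> 2 * c1 * e' * N" using yc cl_iff by auto
    fix z
    {
      assume "z \<in> cluster HX HZ c1 e' y"
      hence zg: "z \<in> goodZ HZ e'" and dz: "D (y + z) \<le> 2 * c1 * e' * N" using cl_iff by auto
      have "y' + z = (y + y') + (y + z)" by (simp add: add_ac vec_self vec_self2)
      hence "D (y' + z) \<le> 4 * c1 * e' * N" using D_tri[of "y + y'" "y + z"] dyy dz by simp
      hence "D (y' + z) \<le> 2 * c1 * e' * N" using A syn2[OF y'g zg] by blast
      thus "z \<in> cluster HX HZ c1 e' y'" using zg cl_iff by blast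
    }
    {
      assume "z \<in> cluster HX HZ c1 e' y'"
      hence zg: "z \<in> goodZ HZ e'" and dz: "D (y' + z) \<le> 2 * c1 * e' * N" using cl_iff by auto
      have "y + z = (y + y') + (y' + z)" by (simp add: add_ac vec_self vec_self2)
      hence "D (y + z) \<le> 4 * c1 * e' * N" using D_tri[of "y + y'" "y' + z"] dyy dz by simp
      hence "D (y + z) \<le> 2 * c1 * e' * N" using A syn2[OF yg zg] by blast
      thus "z \<in> cluster HX HZ c1 e' y" using zg cl_iff by blast
    }
  qed
  have ker_syn: "HZ *v (a + c) = HZ *v a" if "c \<in> ker HZ" for a c
    using that by (simp add: ker_def matrix_vector_right_distrib)
  have shiftg: "a + c \<in> goodZ HZ e'" if "a \<in> goodZ HZ e'" "c \<in> ker HZ" for a c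
    using that ker_syn unfolding goodZ_def by simp
  have T: "translates HX HZ c1 e' y = translates HX HZ c1 e' y'"
    if yg: "y \<in> goodZ HZ e'" and yc: "y' \<in> cluster HX HZ c1 e' y" for y y'
  proof -
    have y'g: "y' \<in> goodZ HZ e'" and dyy: "D (y + y') \<le> 2 * c1 * e' * N" using yc cl_iff by auto
    have "cluster HX HZ c1 e' (y + c) = cluster HX HZ c1 e' (y' + c)" if c: "c \<in> ker HZ" for c
    proof (rule P)
      show "y + c \<in> goodZ HZ e'" using shiftg yg c by blast
      have "(y + c) + (y' + c) = y + y'" by (simp add: add_ac vec_self vec_self2)
      thus "y' + c \<in> cluster HX HZ c1 e' (y + c)" using cl_iff shiftg[OF y'g c] dyy by simp
    qed
    thus ?thesis unfolding translates_def by (auto; metis)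
  qed
  show ?thesis
    unfolding e'_def[symmetric]
  proof (intro ballI)
    fix y y' assume yg: "y \<in> goodZ HZ e'" and yc: "y' \<in> cluster HX HZ c1 e' y"
    have y'g: "y' \<in> goodZ HZ e'" using yc cl_iff by auto
    obtain c0 where c0: "c0 \<in> ker HZ" "R (translates HX HZ c1 e' y) = cluster HX HZ c1 e' (y + c0)"
      using R_rep yg unfolding e'_def[symmetric] translates_def by auto
    obtain c where c: "c \<in> ker HZ" "eZ (HZ *v y) = y + c" "y + c \<in> cluster HX HZ c1 e' (y + c0)"
      using eZ_def yg c0(2) unfolding e'_def[symmetric] by auto
    have RR: "R (translates HX HZ c1 e' y') = cluster HX HZ c1 e' (y + c0)"
      using T[OF yg yc] c0(2) by simp
    obtain c' where c': "c' \<in> ker HZ" "eZ (HZ *v y') = y' + c'" "y' + c' \<in> cluster HX HZ c1 e' (y + c0)"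
      using eZ_def y'g RR unfolding e'_def[symmetric] by auto
    have y'c0: "y' + c0 \<in> cluster HX HZ c1 e' (y + c0)"
    proof -
      have "(y + c0) + (y' + c0) = y + y'" by (simp add: add_ac vec_self vec_self2)
      thus ?thesis using cl_iff shiftg[OF y'g c0(1)] yc by simp
    qed
    have c'2: "y' + c' \<in> cluster HX HZ c1 e' (y' + c0)"
      using c'(3) P[OF shiftg[OF yg c0(1)] y'c0] by simp
    have d1: "D (c0 + c) \<le> 2 * c1 * e' * N"
    proof -
      have "(y + c0) + (y + c) = c0 + c" by (simp add: add_ac vec_self vec_self2)
      thus ?thesis using c(3) cl_iff by metis
    qed
    have d2: "D (c0 + c') \<le> 2 * c1 * e' * N"
    proof -
      have "(y' + c0) + (y' + c') = c0 + c'" by (simp add: add_ac vec_self vec_self2)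
      thus ?thesis using c'2 cl_iff by metis
    qed
    have "c + c' = (c0 + c) + (c0 + c')" by (simp add: add_ac vec_self vec_self2)
    hence "D (c + c') \<le> 4 * c1 * e' * N" using D_tri[of "c0 + c" "c0 + c'"] d1 d2 by simp
    hence w: "c + c' \<in> dual (ker HX)" using B ker_add[OF c(1) c'(1)] by blast
    have "y' + eZ (HZ *v y') = y + eZ (HZ *v y) + (c + c')"
      using c(2) c'(2) by (simp add: add_ac vec_self vec_self2)
    thus "y' + eZ (HZ *v y') \<in> {y + eZ (HZ *v y) + c |c. c \<in> dual (ker HX)}" using w by blast
  qed
qed

end
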